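(* For every $n\ge0$, $$B_{n,q}(x)=\sum_{k=0}^{n}\binom{n}{k}_qB_{n-k,q}(1)\,(x-1)_q^{k}.$$
   Context: Fix $q$ with $0<q<1$. For an integer $n\geq 0$ let $[n]_q=\frac{1-q^n}{1-q}$, $[n]_q!=[n]_q[n-1]_q\cdots[1]_q$ (with $[0]_q!=1$), and for $0\le l\le n$ let $\binom{n}{l}_q=\frac{[n]_q!}{[l]_q!\,[n-l]_q!}$. Let $e_q(t)=\sum_{n\ge0}\frac{t^n}{[n]_q!}$ (a formal power series). The $q$-Bernoulli polynomials $B_{n,q}(x)$ are defined by $\frac{t}{e_q(t)-1}e_q(xt)=\sum_{n\ge0}B_{n,q}(x)\frac{t^n}{[n]_q!}$. For $k\ge0$, $(x-1)_q^{k}=(x-1)(x-q)\cdots(x-q^{k-1})$, with $(x-1)_q^0=1$. *)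

theory Defs
  imports Complex_Main "HOL-Computational_Algebra.Formal_Power_Series"
begin

definition qint :: "real \<Rightarrow> nat \<Rightarrow> real" where
  "qint q n = (1 - q ^ n) / (1 - q)"

definition qfact :: "real \<Rightarrow> nat \<Rightarrow> real" where
  "qfact q n = (\<Prod>i\<in>{1..n}. qint q i)"

definition qbinom :: "real \<Rightarrow> nat \<Rightarrow> nat \<Rightarrow> real" where
  "qbinom q n l = qfact q n / (qfact q l * qfact q (n - l))"

definition eq_fps :: "real \<Rightarrow> real \<Rightarrow> real fps" where
  "eq_fps q x = Abs_fps (\<lambda>n. x ^ n / qfact q n)"

definition qbernoulli :: "real \<Rightarrow> nat \<Rightarrow> real \<Rightarrow> real" where
  "qbernoulli q n x =
     qfact q n * fps_nth ((fps_X / (eq_fps q 1 - 1)) * eq_fps q x) n"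

definition qpow_shift :: "real \<Rightarrow> real \<Rightarrow> nat \<Rightarrow> real" where
  "qpow_shift q x k = (\<Prod>i<k. (x - q ^ i))"

end

theory Submission
  imports Defs
begin

lemma qint_pos: assumes "0 < q" "q < 1" "n \<ge> 1" shows "qint q n > 0"
proof -
  have "q ^ n < 1" using assms by (simp add: power_less_one_iff)
  then show ?thesis using assms by (simp add: qint_def)
qed

lemma qfact_pos: assumes "0 < q" "q < 1" shows "qfact q n > 0"
  unfolding qfact_def using qint_pos[OF assms] by (intro prod_pos) auto

lemma qfact_Suc: "qfact q (Suc n) = qfact q n * qint q (Suc n)"
  unfolding qfact_def by (simp add: prod.nat_ivl_Suc' mult.commute)

lemma qfact_0[simp]: "qfact q 0 = 1" unfolding qfact_def by simp

lemma qbinom_pascal: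
  assumes "0 < q" "q < 1" "1 \<le> j" "j \<le> n"
  shows "qbinom q (Suc n) j = qbinom q n (j - 1) + q ^ j * qbinom q n j"
proof -
  obtain i where j: "j = Suc i" using assms by (cases j) auto
  obtain m where nm: "n - j = m" by blast
  have n: "n = i + 1 + m" using nm j assms by simp
  have e1: "Suc n - j = Suc m" using n j by simp
  have e2: "n - (j - 1) = Suc m" using n j by simp
  have p: "qfact q i > 0" "qfact q m > 0" "qfact q n > 0"
    using qfact_pos[OF assms(1,2)] by auto
  have q1: "1 - q \<noteq> 0" using assms by simp
  have key: "qint q (Suc n) = qint q (Suc i) + q ^ (Suc i) * qint q (Suc m)"
    unfolding qint_def using q1 n by (simp add: field_simps power_add)
  have e3: "n - i = Suc m" "n - Suc i = m" using n by auto
  have qi: "qint q (Suc i) > 0" "qint q (Suc m) > 0" using qint_pos[OF assms(1,2)] by auto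
  show ?thesis
    unfolding qbinom_def e1 e2 j using p qi
    by (simp add: qfact_Suc key field_simps e3)
qed

lemma qbinom_0[simp]: assumes "0 < q" "q < 1" shows "qbinom q n 0 = 1"
  unfolding qbinom_def using qfact_pos[OF assms, of n] by simp

lemma qbinom_n[simp]: assumes "0 < q" "q < 1" shows "qbinom q n n = 1"
  unfolding qbinom_def using qfact_pos[OF assms, of n] by simp

lemma qpow_shift_Suc: "qpow_shift q x (Suc k) = qpow_shift q x k * (x - q ^ k)"
  unfolding qpow_shift_def by simp

lemma qtaylor:
  assumes "0 < q" "q < 1"
  shows "x ^ n = (\<Sum>k=0..n. qbinom q n k * qpow_shift q x k)"
proof (induction n)
  case 0
  then show ?case using assms by (simp add: qpow_shift_def)
next
  case (Suc n)
  define b where "b = qbinom q n"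
  define s where "s = qpow_shift q x"
  have xs: "x * s k = s (Suc k) + q ^ k * s k" for k
    unfolding s_def qpow_shift_Suc by (simp add: algebra_simps)
  have "x ^ Suc n = (\<Sum>k=0..n. b k * (x * s k))"
    using Suc by (simp add: b_def s_def sum_distrib_left algebra_simps)
  also have "\<dots> = (\<Sum>k=0..n. b k * s (Suc k)) + (\<Sum>k=0..n. b k * q ^ k * s k)"
    by (simp add: xs algebra_simps sum.distrib)
  also have "(\<Sum>k=0..n. b k * s (Suc k)) = (\<Sum>k=1..n. b (k - 1) * s k) + b n * s (Suc n)"
  proof -
    have "(\<Sum>k=0..n. b k * s (Suc k)) = (\<Sum>k=Suc 0..Suc n. b (k - 1) * s k)"
      by (subst sum.shift_bounds_cl_Suc_ivl) simp
    also have "\<dots> = (\<Sum>k=1..n. b (k - 1) * s k) + b n * s (Suc n)"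
      by (simp add: sum.nat_ivl_Suc')
    finally show ?thesis .
  qed
  also have "(\<Sum>k=0..n. b k * q ^ k * s k) = s 0 + (\<Sum>k=1..n. b k * q ^ k * s k)"
    using assms by (simp add: sum.atLeast_Suc_atMost b_def)
  finally have "x ^ Suc n = s 0 + (\<Sum>k=1..n. (b (k - 1) + q ^ k * b k) * s k) + s (Suc n)"
    using assms by (simp add: b_def sum.distrib algebra_simps)
  also have "(\<Sum>k=1..n. (b (k - 1) + q ^ k * b k) * s k) = (\<Sum>k=1..n. qbinom q (Suc n) k * s k)"
    using qbinom_pascal[OF assms] by (intro sum.cong) (auto simp: b_def)
  also have "s 0 + (\<Sum>k=1..n. qbinom q (Suc n) k * s k) + s (Suc n)
      = (\<Sum>k=0..Suc n. qbinom q (Suc n) k * s k)"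
    using assms by (simp add: sum.atLeast_Suc_atMost sum.nat_ivl_Suc')
  finally show ?case by (simp add: s_def)
qed

theorem mainTheorem7:
  fixes q x :: real and n :: nat
  assumes "0 < q" and "q < 1"
  shows "qbernoulli q n x =
    (\<Sum>k=0..n. qbinom q n k * qbernoulli q (n - k) 1 * qpow_shift q x k)"
proof -
  define P where "P = Abs_fps (\<lambda>k. qpow_shift q x k / qfact q k)"
  define G where "G = fps_X / (eq_fps q 1 - 1)"
  have pos: "\<And>m. qfact q m > 0" using qfact_pos[OF assms] by auto
  have nz: "\<And>m. qfact q m \<noteq> 0" using pos by (metis less_irrefl)
  have EP: "eq_fps q x = P * eq_fps q 1"
  proof (rule fps_ext)
    fix m
    have "x ^ m / qfact q m = (\<Sum>k=0..m. qbinom q m k * qpow_shift q x k) / qfact q m"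
      using qtaylor[OF assms] by simp
    also have "\<dots> = (\<Sum>k=0..m. qpow_shift q x k / qfact q k * (1 / qfact q (m - k)))"
      unfolding sum_divide_distrib qbinom_def
      by (intro sum.cong) (auto simp: field_simps nz)
    finally show "fps_nth (eq_fps q x) m = fps_nth (P * eq_fps q 1) m"
      by (simp add: eq_fps_def P_def fps_mult_nth)
  qed
  have B1: "fps_nth (G * eq_fps q 1) m = qbernoulli q m 1 / qfact q m" for m
    using pos[of m] by (simp add: qbernoulli_def G_def)
  have "qbernoulli q n x = qfact q n * fps_nth (P * (G * eq_fps q 1)) n"
    unfolding qbernoulli_def EP G_def[symmetric] by (simp add: algebra_simps)
  also have "\<dots> = (\<Sum>k=0..n. qfact q n * (qpow_shift q x k / qfact q k * (qbernoulli q (n - k) 1 / qfact q (n - k))))"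
    unfolding fps_mult_nth[of P "G * eq_fps q 1"] B1 by (simp add: P_def sum_distrib_left)
  also have "\<dots> = (\<Sum>k=0..n. qbinom q n k * qbernoulli q (n - k) 1 * qpow_shift q x k)"
    unfolding qbinom_def by (intro sum.cong) (auto simp: field_simps nz)
  finally show ?thesis .
qed

end
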